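(* (i) There exists $c_1>0$ such that $G(\beta,\gamma)\le \frac{c_1}{\beta^3}-F$ for all $\beta>0$ and $\gamma\ge0$. (ii) $G(\beta,\gamma)=-F$ for all $\beta>0$ and $\gamma\ge V_1$, where $V_1=\sup_{x\in\Omega}\left\{-\frac{\partial h_0}{\partial x_1}(x)\right\}$.
   Context: Let $\Omega\subset\mathbb{R}^2$ be a bounded open set with regular boundary and $0\in\Omega$. Let $h_0\in C^1(\bar\Omega)$ with $h_0\ge 0$ and $\min_{\Omega}h_0=h_0(0)=0$. Let $F>0$, $K=\{\varphi\in H^1_0(\Omega):\varphi\ge 0\}$. For $\beta>0$, $\gamma\in\mathbb{R}$, let $q\in K$ be the unique solution of $\int_\Omega (h_0+\beta)^3\nabla q\cdot\nabla(\varphi-q)\ge \int_\Omega h_0\,\partial_{x_1}(\varphi-q)-\gamma\int_\Omega(\varphi-q)$ for all $\varphi\in K$, and set $G(\beta,\gamma)=\int_\Omega q\,dx-F$. *)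

theory Defs
  imports "HOL-Analysis.Analysis"
begin

type_synonym pt = "real ^ 2"

definition rot2 :: "real \<Rightarrow> pt \<Rightarrow> pt" where
  "rot2 \<theta> y = vector [cos \<theta> * y$1 + sin \<theta> * y$2, - sin \<theta> * y$1 + cos \<theta> * y$2]"

definition regular_boundary :: "pt set \<Rightarrow> bool" where
  "regular_boundary \<Omega> \<longleftrightarrow>
     (\<forall>p\<in>frontier \<Omega>. \<exists>r>0. \<exists>\<theta> (g::real\<Rightarrow>real). g C1_differentiable_on UNIV \<and>
        \<Omega> \<inter> ball p r = {x\<in>ball p r. (rot2 \<theta> (x - p))$2 > g ((rot2 \<theta> (x - p))$1)})"

definition pderiv :: "2 \<Rightarrow> (pt \<Rightarrow> real) \<Rightarrow> pt \<Rightarrow> real" where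
  "pderiv i f x = frechet_derivative f (at x) (axis i 1)"

definition cgrad :: "(pt \<Rightarrow> real) \<Rightarrow> pt \<Rightarrow> pt" where
  "cgrad f x = (\<chi> i. frechet_derivative f (at x) (axis i 1))"

definition C1_closure :: "pt set \<Rightarrow> (pt \<Rightarrow> real) \<Rightarrow> bool" where
  "C1_closure \<Omega> h \<longleftrightarrow> continuous_on (closure \<Omega>) h \<and>
     (\<exists>D::pt \<Rightarrow> pt. continuous_on (closure \<Omega>) D \<and>
        (\<forall>x\<in>\<Omega>. (h has_derivative (\<lambda>v. D x \<bullet> v)) (at x)))"

definition test_fun :: "pt set \<Rightarrow> (pt \<Rightarrow> real) \<Rightarrow> bool" where
  "test_fun \<Omega> \<phi> \<longleftrightarrow> \<phi> differentiable_on UNIV \<and>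
     (\<forall>i. continuous_on UNIV (\<lambda>x. frechet_derivative \<phi> (at x) (axis i 1))) \<and>
     compact (closure {x. \<phi> x \<noteq> 0}) \<and> closure {x. \<phi> x \<noteq> 0} \<subseteq> \<Omega>"

definition L2 :: "pt set \<Rightarrow> (pt \<Rightarrow> real) \<Rightarrow> bool" where
  "L2 \<Omega> f \<longleftrightarrow> f \<in> borel_measurable (lebesgue_on \<Omega>) \<and>
     integrable (lebesgue_on \<Omega>) (\<lambda>x. (f x)^2)"

definition H1 :: "pt set \<Rightarrow> (pt \<Rightarrow> real) \<Rightarrow> (pt \<Rightarrow> pt) \<Rightarrow> bool" where
  "H1 \<Omega> u Du \<longleftrightarrow> L2 \<Omega> u \<and> (\<forall>i. L2 \<Omega> (\<lambda>x. Du x $ i)) \<and>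
     (\<forall>\<phi>. test_fun \<Omega> \<phi> \<longrightarrow> (\<forall>i.
        (\<integral>x. u x * cgrad \<phi> x $ i \<partial>lebesgue_on \<Omega>) = - (\<integral>x. Du x $ i * \<phi> x \<partial>lebesgue_on \<Omega>)))"

definition H10 :: "pt set \<Rightarrow> (pt \<Rightarrow> real) \<Rightarrow> (pt \<Rightarrow> pt) \<Rightarrow> bool" where
  "H10 \<Omega> u Du \<longleftrightarrow> H1 \<Omega> u Du \<and>
     (\<exists>s. (\<forall>n. test_fun \<Omega> (s n)) \<and>
        (\<lambda>n. \<integral>x. (s n x - u x)^2 \<partial>lebesgue_on \<Omega>) \<longlonglongrightarrow> 0 \<and>
        (\<forall>i. (\<lambda>n. \<integral>x. (cgrad (s n) x $ i - Du x $ i)^2 \<partial>lebesgue_on \<Omega>) \<longlonglongrightarrow> 0))"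

definition inK :: "pt set \<Rightarrow> (pt \<Rightarrow> real) \<Rightarrow> (pt \<Rightarrow> pt) \<Rightarrow> bool" where
  "inK \<Omega> u Du \<longleftrightarrow> H10 \<Omega> u Du \<and> (AE x in lebesgue_on \<Omega>. u x \<ge> 0)"

definition solves_VI :: "pt set \<Rightarrow> (pt \<Rightarrow> real) \<Rightarrow> real \<Rightarrow> real \<Rightarrow> (pt \<Rightarrow> real) \<Rightarrow> (pt \<Rightarrow> pt) \<Rightarrow> bool" where
  "solves_VI \<Omega> h0 \<beta> \<gamma> q Dq \<longleftrightarrow> inK \<Omega> q Dq \<and>
     (\<forall>\<phi> D\<phi>. inK \<Omega> \<phi> D\<phi> \<longrightarrow>
        (\<integral>x. (h0 x + \<beta>)^3 * (Dq x \<bullet> (D\<phi> x - Dq x)) \<partial>lebesgue_on \<Omega>)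
        \<ge> (\<integral>x. h0 x * (D\<phi> x $ 1 - Dq x $ 1) \<partial>lebesgue_on \<Omega>)
           - \<gamma> * (\<integral>x. \<phi> x - q x \<partial>lebesgue_on \<Omega>))"

text \<open>G(beta,gamma) = int q - F, for the solution q.\<close>
definition Gfun :: "pt set \<Rightarrow> real \<Rightarrow> (pt \<Rightarrow> real) \<Rightarrow> real" where
  "Gfun \<Omega> F q = (\<integral>x. q x \<partial>lebesgue_on \<Omega>) - F"

end

theory Submission imports Defs begin

lemma translate_integral:
  fixes f :: "'a::euclidean_space \<Rightarrow> real"
  assumes "f \<in> borel_measurable borel"
  shows "integral\<^sup>L lborel (\<lambda>x. f (c + x)) = integral\<^sup>L lborel f"
  using integral_distr[of "(+) c" lborel borel f] assms lborel_distr_plus[of c] by simp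

lemma translate_integrable:
  fixes f :: "'a::euclidean_space \<Rightarrow> real"
  assumes "f \<in> borel_measurable borel" "integrable lborel f"
  shows "integrable lborel (\<lambda>x. f (c + x))"
  using integrable_distr_eq[of "(+) c" lborel borel f] assms lborel_distr_plus[of c] by simp

lemma eps_zero:
  fixes a m :: real
  assumes "\<And>\<epsilon>. \<epsilon> > 0 \<Longrightarrow> \<bar>a\<bar> \<le> \<epsilon> * m" "m \<ge> 0"
  shows "a = 0"
proof (rule ccontr)
  assume ne0: "a \<noteq> 0"
  define \<epsilon> where "\<epsilon> = \<bar>a\<bar> / (2 * (m + 1))"
  have "\<epsilon> > 0" unfolding \<epsilon>_def using ne0 assms(2) by (intro divide_pos_pos) auto
  from assms(1)[OF this] have "\<bar>a\<bar> \<le> \<epsilon> * m" .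
  moreover have "\<epsilon> * m < \<bar>a\<bar>"
  proof -
    have p: "0 < \<bar>a\<bar>" using ne0 by simp
    have "\<epsilon> * m = \<bar>a\<bar> * (m / (2 * (m + 1)))" unfolding \<epsilon>_def by simp
    also have "m / (2 * (m + 1)) < 1" using assms(2) by (simp add: field_simps)
    hence "\<bar>a\<bar> * (m / (2 * (m + 1))) < \<bar>a\<bar> * 1" using p by (intro mult_strict_left_mono) auto
    finally show ?thesis by simp
  qed
  ultimately show False by simp
qed

lemma zero_int:
  fixes f g :: "'a::euclidean_space \<Rightarrow> real" and e :: 'a
  assumes K: "compact K" and cg: "continuous_on UNIV g" and cf: "continuous_on UNIV f"
    and f0: "\<And>x. x \<notin> K \<Longrightarrow> f x = 0" and g0: "\<And>x. x \<notin> K \<Longrightarrow> g x = 0"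
    and d: "\<And>x. ((\<lambda>t. f (x + t *\<^sub>R e)) has_real_derivative g x) (at 0)"
    and ne: "norm e = 1"
  shows "integral\<^sup>L lborel g = 0"
proof -
  obtain r where r0: "\<forall>x\<in>K. norm x \<le> r" "r > 0"
    using K compact_imp_bounded bounded_pos by metis
  hence r: "K \<subseteq> cball 0 r" "r > 0" by auto
  define C where "C = cball (0::'a) (r+1)"
  define C2 where "C2 = cball (0::'a) (r+2)"
  have uc: "uniformly_continuous_on C2 g"
    unfolding C2_def by (rule compact_uniformly_continuous) (use cg continuous_on_subset in auto)
  have gb: "g \<in> borel_measurable borel" "f \<in> borel_measurable borel"
    using cg cf borel_measurable_continuous_onI by auto
  have ig: "integrable lborel g"
  proof -
    have "integrable lborel (\<lambda>x. indicat_real K x *\<^sub>R g x)"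
      by (rule borel_integrable_compact[OF K]) (use cg continuous_on_subset in blast)
    moreover have "(\<lambda>x. indicat_real K x *\<^sub>R g x) = g" using g0 by (force simp: indicator_def)
    ultimately show ?thesis by simp
  qed
  have iff: "integrable lborel f"
  proof -
    have "integrable lborel (\<lambda>x. indicat_real K x *\<^sub>R f x)"
      by (rule borel_integrable_compact[OF K]) (use cf continuous_on_subset in blast)
    moreover have "(\<lambda>x. indicat_real K x *\<^sub>R f x) = f" using f0 by (force simp: indicator_def)
    ultimately show ?thesis by simp
  qed
  have iC: "integrable lborel (indicat_real C)"
    unfolding C_def by (intro integrable_real_indicator emeasure_bounded_finite) auto
  have mC: "0 \<le> measure lborel C" by (rule measure_nonneg)
  have deriv: "((\<lambda>s. f (x + s *\<^sub>R e)) has_real_derivative g (x + s *\<^sub>R e)) (at s)" for x s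
  proof -
    have "((\<lambda>u. f ((x + s *\<^sub>R e) + u *\<^sub>R e)) has_real_derivative g (x + s *\<^sub>R e)) (at 0)"
      by (rule d)
    hence "((\<lambda>u. f (x + (u + s) *\<^sub>R e)) has_real_derivative g (x + s *\<^sub>R e)) (at 0)"
      by (simp add: algebra_simps scaleR_add_left)
    hence "((\<lambda>s. f (x + s *\<^sub>R e)) has_real_derivative g (x + s *\<^sub>R e)) (at (0 + s))"
      using DERIV_shift[of "\<lambda>s. f (x + s *\<^sub>R e)" "g (x + s *\<^sub>R e)" 0 s] by simp
    thus ?thesis by simp
  qed
  have bound: "\<bar>integral\<^sup>L lborel g\<bar> \<le> \<epsilon> * measure lborel C" if "\<epsilon> > 0" for \<epsilon>
  proof -
    obtain \<delta> where \<delta>: "\<delta> > 0" "\<And>x y. x \<in> C2 \<Longrightarrow> y \<in> C2 \<Longrightarrow> dist y x < \<delta> \<Longrightarrow> dist (g y) (g x) < \<epsilon>"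
      using uc \<open>\<epsilon> > 0\<close> unfolding uniformly_continuous_on_def by metis
    define t where "t = min (\<delta>/2) (1/2)"
    have t: "t > 0" "t < \<delta>" "t < 1" using \<delta> by (auto simp: t_def)
    define D where "D = (\<lambda>x. (f (t *\<^sub>R e + x) - f x) / t)"
    have pw: "\<bar>D x - g x\<bar> \<le> \<epsilon> * indicat_real C x" for x
    proof -
      obtain z where z: "0 < z" "z < t" "f (x + t *\<^sub>R e) - f (x + 0 *\<^sub>R e) = (t - 0) * g (x + z *\<^sub>R e)"
        using MVT2[of 0 t "\<lambda>s. f (x + s *\<^sub>R e)" "\<lambda>s. g (x + s *\<^sub>R e)"] t deriv by blast
      have Dx: "D x = g (x + z *\<^sub>R e)" using z t unfolding D_def by (simp add: add.commute)
      have nz: "norm (z *\<^sub>R e) < 1" using z t ne by simp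
      show ?thesis
      proof (cases "x \<in> C")
        case True
        have "x \<in> C2" using True r unfolding C_def C2_def by auto
        moreover have "x + z *\<^sub>R e \<in> C2" using True nz unfolding C_def C2_def
          using norm_triangle_ineq[of x "z *\<^sub>R e"] by auto
        moreover have "dist (x + z *\<^sub>R e) x < \<delta>" using nz t z ne by (simp add: dist_norm)
        ultimately have "dist (g (x + z *\<^sub>R e)) (g x) < \<epsilon>" using \<delta> by blast
        thus ?thesis using True Dx by (simp add: dist_real_def)
      next
        case False
        hence nx: "norm x > r + 1" unfolding C_def by auto
        have "x \<notin> K" using nx r by auto
        moreover have "norm (x + z *\<^sub>R e) > r"
          using norm_triangle_ineq2[of x "- (z *\<^sub>R e)"] nx nz by auto
        hence "x + z *\<^sub>R e \<notin> K" using r by auto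
        ultimately show ?thesis using Dx g0 False by simp
      qed
    qed
    have iD: "integrable lborel D"
      unfolding D_def
      by (intro integrable_divide Bochner_Integration.integrable_diff translate_integrable gb iff)
    have "integral\<^sup>L lborel D = 0"
      unfolding D_def using translate_integral[OF gb(2), of "t *\<^sub>R e"]
      by (simp add: Bochner_Integration.integral_diff translate_integrable[OF gb(2) iff] iff)
    hence "integral\<^sup>L lborel g = - integral\<^sup>L lborel (\<lambda>x. D x - g x)"
      using Bochner_Integration.integral_diff[OF iD ig] by simp
    hence "\<bar>integral\<^sup>L lborel g\<bar> = \<bar>integral\<^sup>L lborel (\<lambda>x. D x - g x)\<bar>" by simp
    also have "\<dots> \<le> integral\<^sup>L lborel (\<lambda>x. \<epsilon> * indicat_real C x)"
      by (rule integral_abs_bound_integral) (use iD ig iC pw in auto)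
    also have "\<dots> = \<epsilon> * measure lborel C" using iC by simp
    finally show ?thesis .
  qed
  show ?thesis by (rule eps_zero[OF bound mC])
qed
abbreviation e1 :: "real^2" where "e1 \<equiv> axis 1 1"

lemma line_deriv:
  fixes F :: "'a::real_normed_vector \<Rightarrow> real"
  assumes "(F has_derivative F') (at x)"
  shows "((\<lambda>t. F (x + t *\<^sub>R e)) has_real_derivative F' e) (at 0)"
proof -
  have l: "((\<lambda>t::real. x + t *\<^sub>R e) has_derivative (\<lambda>t. t *\<^sub>R e)) (at 0)"
    by (auto intro!: derivative_eq_intros)
  have "((\<lambda>t. F (x + t *\<^sub>R e)) has_derivative (\<lambda>t. F' (t *\<^sub>R e))) (at 0)"
    using has_derivative_compose[OF l, of F F'] assms by simp
  moreover have "(\<lambda>t. F' (t *\<^sub>R e)) = (*) (F' e)"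
    using has_derivative_linear[OF assms] by (auto simp: linear_scale fun_eq_iff)
  ultimately show ?thesis by (simp add: has_field_derivative_def)
qed

lemma loc_cont:
  fixes F :: "'a::metric_space \<Rightarrow> 'b::metric_space"
  assumes "\<And>x. \<exists>U h. open U \<and> x \<in> U \<and> isCont h x \<and> (\<forall>y\<in>U. F y = h y)"
  shows "continuous_on UNIV F"
proof (rule continuous_at_imp_continuous_on, rule ballI)
  fix x :: 'a
  obtain U h where U: "open U" "x \<in> U" "isCont h x" "\<forall>y\<in>U. F y = h y" using assms by blast
  show "isCont F x"
    using continuous_transform_within_openin[of x UNIV h U F] U by auto
qed

lemma open_lebesgue: "open (S::'a::euclidean_space set) \<Longrightarrow> S \<in> sets lebesgue"
  by (metis borel_open sets_completionI_sets sets_lborel)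

lemma bdd_int:
  fixes F :: "'a::euclidean_space \<Rightarrow> real"
  assumes "S \<in> lmeasurable" "continuous_on S F" "\<And>x. x \<in> S \<Longrightarrow> \<bar>F x\<bar> \<le> M"
  shows "integrable (lebesgue_on S) F"
proof -
  have fm: "finite_measure (lebesgue_on S)" using assms(1) by (rule finite_measure_lebesgue_on)
  show ?thesis
    by (rule finite_measure.integrable_const_bound[OF fm, of _ M])
       (use assms in \<open>auto intro!: AE_I2 continuous_imp_measurable_on_sets_lebesgue\<close>)
qed

lemma cont_compact_bound:
  fixes h :: "'a::metric_space \<Rightarrow> real"
  assumes "continuous_on UNIV h" "compact S" "\<And>x. x \<notin> S \<Longrightarrow> h x = 0"
  shows "\<exists>M. \<forall>x. \<bar>h x\<bar> \<le> M"
proof -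
  have "compact (h ` S)" using assms continuous_on_subset compact_continuous_image by blast
  then obtain M where M: "\<forall>y\<in>h ` S. norm y \<le> M" "M > 0" using compact_imp_bounded bounded_pos by metis
  have "\<bar>h x\<bar> \<le> M" for x using M assms(3)[of x] by (cases "x \<in> S") auto
  thus ?thesis by blast
qed

lemma test_facts:
  assumes "test_fun \<Omega> s"
  shows "\<And>x. (s has_derivative frechet_derivative s (at x)) (at x)"
    and "continuous_on UNIV s"
    and "continuous_on UNIV (\<lambda>x. cgrad s x $ 1)"
    and "compact (closure {x. s x \<noteq> 0})" "closure {x. s x \<noteq> 0} \<subseteq> \<Omega>"
    and "\<And>x. x \<notin> closure {x. s x \<noteq> 0} \<Longrightarrow> s x = 0"
    and "\<And>x. x \<notin> closure {x. s x \<noteq> 0} \<Longrightarrow> cgrad s x $ 1 = 0"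
    and "\<And>x. ((\<lambda>t. s (x + t *\<^sub>R e1)) has_real_derivative cgrad s x $ 1) (at 0)"
proof -
  have T1: "s differentiable_on UNIV" and T2: "\<forall>i. continuous_on UNIV (\<lambda>x. frechet_derivative s (at x) (axis i 1))"
    and T3: "compact (closure {x. s x \<noteq> 0})" and T4: "closure {x. s x \<noteq> 0} \<subseteq> \<Omega>"
    using assms unfolding test_fun_def by blast+
  show d: "(s has_derivative frechet_derivative s (at x)) (at x)" for x
    using T1 unfolding differentiable_on_def by (metis UNIV_I at_within_open open_UNIV frechet_derivative_works)
  show "continuous_on UNIV s" using T1 by (rule differentiable_imp_continuous_on)
  show "continuous_on UNIV (\<lambda>x. cgrad s x $ 1)" using spec[OF T2, of 1] unfolding cgrad_def by simp
  show "compact (closure {x. s x \<noteq> 0})" "closure {x. s x \<noteq> 0} \<subseteq> \<Omega>" using T3 T4 by auto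
  show z: "s x = 0" if "x \<notin> closure {x. s x \<noteq> 0}" for x
  proof (rule ccontr)
    assume "s x \<noteq> 0"
    hence "x \<in> {x. s x \<noteq> 0}" by simp
    thus False using that closure_subset[of "{x. s x \<noteq> 0}"] by (meson subsetD)
  qed
  show "cgrad s x $ 1 = 0" if "x \<notin> closure {x. s x \<noteq> 0}" for x
  proof -
    have "((\<lambda>x. 0) has_derivative (\<lambda>v. 0)) (at x)" by simp
    moreover have "open (- closure {x. s x \<noteq> 0})" by (rule open_Compl) (rule closed_closure)
    moreover have "x \<in> - closure {x. s x \<noteq> 0}" using that by simp
    moreover have "\<And>y. y \<in> - closure {x. s x \<noteq> 0} \<Longrightarrow> 0 = s y" using z by (metis ComplD)
    ultimately have "(s has_derivative (\<lambda>v. 0)) (at x)"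
      by (rule has_derivative_transform_within_open)
    hence "frechet_derivative s (at x) = (\<lambda>v. 0)" using frechet_derivative_at by metis
    thus ?thesis by (simp add: cgrad_def)
  qed
  show "((\<lambda>t. s (x + t *\<^sub>R e1)) has_real_derivative cgrad s x $ 1) (at 0)" for x
    using line_deriv[OF d[of x], of e1] by (simp add: cgrad_def)
qed
lemma ibp:
  fixes w Dw :: "pt \<Rightarrow> real"
  assumes Om: "open \<Omega>" "bounded \<Omega>" and ts: "test_fun \<Omega> s"
    and cw: "continuous_on \<Omega> w" and cDw: "continuous_on \<Omega> Dw"
    and dw: "\<And>x. x \<in> \<Omega> \<Longrightarrow> ((\<lambda>t. w (x + t *\<^sub>R e1)) has_real_derivative Dw x) (at 0)"
    and bw: "\<And>x. x \<in> \<Omega> \<Longrightarrow> \<bar>w x\<bar> \<le> B" and bDw: "\<And>x. x \<in> \<Omega> \<Longrightarrow> \<bar>Dw x\<bar> \<le> B"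
  shows "integral\<^sup>L (lebesgue_on \<Omega>) (\<lambda>x. w x * cgrad s x $ 1) =
         - integral\<^sup>L (lebesgue_on \<Omega>) (\<lambda>x. Dw x * s x)"
proof -
  define S where "S = closure {x. s x \<noteq> 0}"
  define ps where "ps = (\<lambda>x. cgrad s x $ 1)"
  note tf = test_facts[OF ts, folded S_def ps_def]
  have SO: "S \<subseteq> \<Omega>" using tf(5) .
  have oS: "open (- S)" unfolding S_def by (rule open_Compl) (rule closed_closure)
  have cs: "continuous_on UNIV s" and cps: "continuous_on UNIV ps" using tf(2,3) by auto
  have s0: "\<And>x. x \<notin> S \<Longrightarrow> s x = 0" and ps0: "\<And>x. x \<notin> S \<Longrightarrow> ps x = 0" using tf(6,7) unfolding ps_def by auto
  define f where "f x = (if x \<in> \<Omega> then w x * s x else 0)" for x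
  define g where "g x = (if x \<in> \<Omega> then w x * ps x + Dw x * s x else 0)" for x
  have cat: "isCont F x" if "continuous_on \<Omega> F" "x \<in> \<Omega>" for F :: "pt \<Rightarrow> real" and x
    using that Om(1) continuous_on_eq_continuous_at by blast
  have cO: "continuous_on \<Omega> s" "continuous_on \<Omega> ps"
    using cs cps continuous_on_subset by blast+
  have cwsO: "continuous_on \<Omega> (\<lambda>y. w y * s y)" using cw cO by (intro continuous_intros)
  have cgO: "continuous_on \<Omega> (\<lambda>y. w y * ps y + Dw y * s y)" using cw cDw cO by (intro continuous_intros)
  have cf: "continuous_on UNIV f"
  proof (rule loc_cont)
    fix x
    show "\<exists>U h. open U \<and> x \<in> U \<and> isCont h x \<and> (\<forall>y\<in>U. f y = h y)"
    proof (cases "x \<in> \<Omega>")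
      case True
      thus ?thesis using Om(1) cat[OF cwsO True] unfolding f_def by (intro exI[of _ \<Omega>] exI[of _ "\<lambda>y. w y * s y"]) auto
    next
      case False
      hence "x \<in> - S" using SO by auto
      thus ?thesis using oS s0 unfolding f_def by (intro exI[of _ "- S"] exI[of _ "\<lambda>y. 0"]) auto
    qed
  qed
  have cg: "continuous_on UNIV g"
  proof (rule loc_cont)
    fix x
    show "\<exists>U h. open U \<and> x \<in> U \<and> isCont h x \<and> (\<forall>y\<in>U. g y = h y)"
    proof (cases "x \<in> \<Omega>")
      case True
      thus ?thesis using Om(1) cat[OF cgO True] unfolding g_def
        by (intro exI[of _ \<Omega>] exI[of _ "\<lambda>y. w y * ps y + Dw y * s y"]) auto
    next
      case False
      hence "x \<in> - S" using SO by auto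
      thus ?thesis using oS s0 ps0 unfolding g_def by (intro exI[of _ "- S"] exI[of _ "\<lambda>y. 0"]) auto
    qed
  qed
  have f0: "\<And>x. x \<notin> S \<Longrightarrow> f x = 0" using s0 unfolding f_def by auto
  have g0: "\<And>x. x \<notin> S \<Longrightarrow> g x = 0" using s0 ps0 unfolding g_def by auto
  have cl: "continuous_on UNIV (\<lambda>t::real. x + t *\<^sub>R e1)" for x :: pt by (intro continuous_intros)
  have df: "((\<lambda>t. f (x + t *\<^sub>R e1)) has_real_derivative g x) (at 0)" for x
  proof (cases "x \<in> \<Omega>")
    case True
    have "((\<lambda>t. w (x + t *\<^sub>R e1) * s (x + t *\<^sub>R e1)) has_real_derivative
            Dw x * s (x + 0 *\<^sub>R e1) + cgrad s x $ 1 * w (x + 0 *\<^sub>R e1)) (at 0)"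
      by (rule DERIV_mult[OF dw[OF True] tf(8)[of x]])
    hence d1: "((\<lambda>t. w (x + t *\<^sub>R e1) * s (x + t *\<^sub>R e1)) has_real_derivative g x) (at 0)"
      using True unfolding g_def ps_def by (simp add: algebra_simps)
    show ?thesis
    proof (rule has_field_derivative_transform_within_open[OF d1])
      show "open ((\<lambda>t. x + t *\<^sub>R e1) -` \<Omega>)" using Om(1) cl by (rule open_vimage)
      show "0 \<in> (\<lambda>t. x + t *\<^sub>R e1) -` \<Omega>" using True by simp
      show "w (x + t *\<^sub>R e1) * s (x + t *\<^sub>R e1) = f (x + t *\<^sub>R e1)"
        if "t \<in> (\<lambda>t. x + t *\<^sub>R e1) -` \<Omega>" for t using that unfolding f_def by simp
    qed
  next
    case False
    hence xS: "x \<notin> S" using SO by auto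
    have d1: "((\<lambda>t. 0) has_real_derivative g x) (at 0)" using False unfolding g_def by simp
    show ?thesis
    proof (rule has_field_derivative_transform_within_open[OF d1])
      show "open ((\<lambda>t. x + t *\<^sub>R e1) -` (- S))" using oS cl by (rule open_vimage)
      show "0 \<in> (\<lambda>t. x + t *\<^sub>R e1) -` (- S)" using xS by simp
      show "0 = f (x + t *\<^sub>R e1)" if "t \<in> (\<lambda>t. x + t *\<^sub>R e1) -` (- S)" for t
        using that f0 by simp
    qed
  qed
  have ne: "norm e1 = 1" by simp
  have zg: "integral\<^sup>L lborel g = 0"
    by (rule zero_int[OF tf(4)[folded S_def] cg cf f0 g0 df ne])
  have OL: "\<Omega> \<in> sets lebesgue" using Om(1) by (rule open_lebesgue)
  have Olm: "\<Omega> \<in> lmeasurable" using Om(2) OL by (rule bounded_set_imp_lmeasurable)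
  have gm: "g \<in> borel_measurable lborel" using cg by (simp add: borel_measurable_continuous_onI)
  have "integral\<^sup>L (lebesgue_on \<Omega>) (\<lambda>x. w x * ps x + Dw x * s x)
        = integral\<^sup>L lebesgue (\<lambda>x. indicat_real \<Omega> x *\<^sub>R (w x * ps x + Dw x * s x))"
    using OL by (simp add: integral_restrict_space)
  also have "(\<lambda>x. indicat_real \<Omega> x *\<^sub>R (w x * ps x + Dw x * s x)) = g"
    unfolding g_def by (auto simp: indicator_def)
  also have "integral\<^sup>L lebesgue g = integral\<^sup>L lborel g" using gm by (rule integral_completion)
  finally have sum0: "integral\<^sup>L (lebesgue_on \<Omega>) (\<lambda>x. w x * ps x + Dw x * s x) = 0" using zg by simp
  obtain Ms where Ms: "\<And>x. \<bar>s x\<bar> \<le> Ms" using cont_compact_bound[OF cs tf(4)[folded S_def] s0] by blast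
  obtain Mp where Mp: "\<And>x. \<bar>ps x\<bar> \<le> Mp" using cont_compact_bound[OF cps tf(4)[folded S_def] ps0] by blast
  have i1: "integrable (lebesgue_on \<Omega>) (\<lambda>x. w x * ps x)"
  proof (rule bdd_int[OF Olm, of _ "B * Mp"])
    show "continuous_on \<Omega> (\<lambda>x. w x * ps x)" using cw cO by (intro continuous_intros)
    show "\<bar>w x * ps x\<bar> \<le> B * Mp" if "x \<in> \<Omega>" for x
      unfolding abs_mult using bw[OF that] Mp[of x] by (intro mult_mono) auto
  qed
  have i2: "integrable (lebesgue_on \<Omega>) (\<lambda>x. Dw x * s x)"
  proof (rule bdd_int[OF Olm, of _ "B * Ms"])
    show "continuous_on \<Omega> (\<lambda>x. Dw x * s x)" using cDw cO by (intro continuous_intros)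
    show "\<bar>Dw x * s x\<bar> \<le> B * Ms" if "x \<in> \<Omega>" for x
      unfolding abs_mult using bDw[OF that] Ms[of x] by (intro mult_mono) auto
  qed
  have "integral\<^sup>L (lebesgue_on \<Omega>) (\<lambda>x. w x * ps x) + integral\<^sup>L (lebesgue_on \<Omega>) (\<lambda>x. Dw x * s x) = 0"
    using sum0 Bochner_Integration.integral_add[OF i1 i2] by simp
  thus ?thesis unfolding ps_def by simp
qed
lemma abs_le_1_sq: "\<bar>a::real\<bar> \<le> 1 + a\<^sup>2"
proof (cases "\<bar>a\<bar> \<le> 1")
  case True thus ?thesis by (simp add: add_increasing2)
next
  case False
  hence "\<bar>a\<bar> * 1 \<le> \<bar>a\<bar> * \<bar>a\<bar>" by (intro mult_left_mono) auto
  also have "\<dots> = a\<^sup>2" by (simp add: power2_eq_square abs_mult_self_eq)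
  finally show ?thesis by (simp add: add_increasing)
qed

lemma abs_prod_le: "\<bar>(a::real) * b\<bar> \<le> a\<^sup>2 + b\<^sup>2"
proof -
  have "0 \<le> (\<bar>a\<bar> - \<bar>b\<bar>)\<^sup>2" by simp
  hence "2 * \<bar>a\<bar> * \<bar>b\<bar> \<le> a\<^sup>2 + b\<^sup>2" by (simp add: power2_eq_square algebra_simps)
  moreover have "\<bar>a * b\<bar> \<le> 2 * \<bar>a\<bar> * \<bar>b\<bar>" by (simp add: abs_mult)
  ultimately show ?thesis by linarith
qed

lemma L2_int:
  fixes f :: "'a \<Rightarrow> real"
  assumes fm: "finite_measure M" and m: "f \<in> borel_measurable M" and i: "integrable M (\<lambda>x. (f x)\<^sup>2)"
  shows "integrable M f"
proof (rule Bochner_Integration.integrable_bound[where M=M and f="\<lambda>x. 1 + (f x)\<^sup>2"])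
  show "integrable M (\<lambda>x. 1 + (f x)\<^sup>2)"
    using i finite_measure.integrable_const[OF fm] by (intro Bochner_Integration.integrable_add) auto
  show "f \<in> borel_measurable M" by (rule m)
  show "AE x in M. norm (f x) \<le> norm (1 + (f x)\<^sup>2)"
    using abs_le_1_sq by (intro AE_I2) (simp add: add_nonneg_nonneg)
qed

lemma prod_int:
  fixes f g :: "'a \<Rightarrow> real"
  assumes "f \<in> borel_measurable M" "g \<in> borel_measurable M"
    "integrable M (\<lambda>x. (f x)\<^sup>2)" "integrable M (\<lambda>x. (g x)\<^sup>2)"
  shows "integrable M (\<lambda>x. f x * g x)"
proof (rule Bochner_Integration.integrable_bound[where M=M and f="\<lambda>x. (f x)\<^sup>2 + (g x)\<^sup>2"])
  show "integrable M (\<lambda>x. (f x)\<^sup>2 + (g x)\<^sup>2)" using assms by (intro Bochner_Integration.integrable_add)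
  show "(\<lambda>x. f x * g x) \<in> borel_measurable M" using assms by measurable
  show "AE x in M. norm (f x * g x) \<le> norm ((f x)\<^sup>2 + (g x)\<^sup>2)"
    using abs_prod_le by (intro AE_I2) simp
qed

lemma bmult_int:
  fixes f g :: "'a \<Rightarrow> real"
  assumes "integrable M f" "g \<in> borel_measurable M" "\<And>x. x \<in> space M \<Longrightarrow> \<bar>g x\<bar> \<le> B"
  shows "integrable M (\<lambda>x. g x * f x)"
proof (rule Bochner_Integration.integrable_bound[where M=M and f="\<lambda>x. B * f x"])
  show "integrable M (\<lambda>x. B * f x)" using assms(1) by simp
  show "(\<lambda>x. g x * f x) \<in> borel_measurable M" using assms borel_measurable_integrable by measurable
  show "AE x in M. norm (g x * f x) \<le> norm (B * f x)"
  proof (rule AE_I2)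
    fix x assume "x \<in> space M"
    hence "\<bar>g x\<bar> \<le> \<bar>B\<bar>" using assms(3) by force
    thus "norm (g x * f x) \<le> norm (B * f x)" by (simp add: abs_mult mult_right_mono)
  qed
qed

lemma CS_int:
  fixes f :: "'a \<Rightarrow> real"
  assumes fm: "finite_measure M" and m: "f \<in> borel_measurable M" and i: "integrable M (\<lambda>x. (f x)\<^sup>2)"
  shows "(integral\<^sup>L M (\<lambda>x. \<bar>f x\<bar>))\<^sup>2 \<le> measure M (space M) * integral\<^sup>L M (\<lambda>x. (f x)\<^sup>2)"
proof -
  define A where "A = integral\<^sup>L M (\<lambda>x. \<bar>f x\<bar>)"
  define Q where "Q = integral\<^sup>L M (\<lambda>x. (f x)\<^sup>2)"
  define \<mu> where "\<mu> = measure M (space M)"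
  have if1: "integrable M f" by (rule L2_int[OF fm m i])
  have ia: "integrable M (\<lambda>x. \<bar>f x\<bar>)" using if1 by simp
  have ic: "integrable M (\<lambda>x. c)" for c :: real using finite_measure.integrable_const[OF fm] .
  have A0: "A \<ge> 0" unfolding A_def by simp
  have \<mu>0: "\<mu> \<ge> 0" unfolding \<mu>_def by simp
  have key: "0 \<le> Q - 2 * m * A + m\<^sup>2 * \<mu>" for m :: real
  proof -
    have "0 \<le> integral\<^sup>L M (\<lambda>x. (\<bar>f x\<bar> - m)\<^sup>2)" by simp
    also have "(\<lambda>x. (\<bar>f x\<bar> - m)\<^sup>2) = (\<lambda>x. ((f x)\<^sup>2 - (2 * m) * \<bar>f x\<bar>) + m\<^sup>2)"
      by (auto simp: power2_eq_square algebra_simps)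
    also have "integral\<^sup>L M \<dots> = Q - 2 * m * A + m\<^sup>2 * \<mu>"
      using i ia ic unfolding Q_def A_def \<mu>_def
      by (simp add: Bochner_Integration.integral_add Bochner_Integration.integral_diff
          Bochner_Integration.integrable_diff finite_measure.emeasure_eq_measure[OF fm])
    finally show ?thesis .
  qed
  show ?thesis
  proof (cases "\<mu> > 0")
    case True
    have "0 \<le> Q - 2 * (A / \<mu>) * A + (A / \<mu>)\<^sup>2 * \<mu>" by (rule key)
    also have "\<dots> = Q - A\<^sup>2 / \<mu>" using True by (simp add: power2_eq_square field_simps)
    finally have "A\<^sup>2 / \<mu> \<le> Q" by simp
    hence "A\<^sup>2 \<le> \<mu> * Q" using True by (simp add: field_simps)
    thus ?thesis unfolding A_def Q_def \<mu>_def .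
  next
    case False
    hence \<mu>z: "\<mu> = 0" using \<mu>0 by simp
    have "A = 0"
    proof (rule ccontr)
      assume "A \<noteq> 0"
      hence Ap: "A > 0" using A0 by simp
      have "0 \<le> Q - 2 * ((Q + 1) / (2 * A)) * A + ((Q + 1) / (2 * A))\<^sup>2 * \<mu>" by (rule key)
      also have "\<dots> = -1" using Ap \<mu>z by (simp add: field_simps)
      finally show False by simp
    qed
    thus ?thesis unfolding A_def Q_def \<mu>_def using \<mu>z by (simp add: \<mu>_def)
  qed
qed

lemma abs_bound_int:
  fixes f g :: "'a \<Rightarrow> real"
  assumes "integrable M f" "integrable M g" "\<And>x. x \<in> space M \<Longrightarrow> \<bar>f x\<bar> \<le> g x"
  shows "\<bar>integral\<^sup>L M f\<bar> \<le> integral\<^sup>L M g"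
proof -
  have "\<bar>integral\<^sup>L M f\<bar> \<le> integral\<^sup>L M (\<lambda>x. \<bar>f x\<bar>)" by (rule integral_abs_bound)
  also have "\<dots> \<le> integral\<^sup>L M g" using assms by (intro integral_mono) auto
  finally show ?thesis .
qed

lemma lim_int:
  fixes g a :: "'a \<Rightarrow> real" and an :: "nat \<Rightarrow> 'a \<Rightarrow> real"
  assumes fm: "finite_measure M" and gm: "g \<in> borel_measurable M" and gb: "\<And>x. x \<in> space M \<Longrightarrow> \<bar>g x\<bar> \<le> B"
    and am: "a \<in> borel_measurable M" "\<And>n. an n \<in> borel_measurable M"
    and ai: "integrable M (\<lambda>x. (a x)\<^sup>2)" "\<And>n. integrable M (\<lambda>x. (an n x)\<^sup>2)"
    and lim: "(\<lambda>n. integral\<^sup>L M (\<lambda>x. (an n x - a x)\<^sup>2)) \<longlonglongrightarrow> 0"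
  shows "(\<lambda>n. integral\<^sup>L M (\<lambda>x. g x * an n x)) \<longlonglongrightarrow> integral\<^sup>L M (\<lambda>x. g x * a x)"
proof -
  define \<mu> where "\<mu> = measure M (space M)"
  have ia: "integrable M a" by (rule L2_int[OF fm am(1) ai(1)])
  have ian: "integrable M (an n)" for n by (rule L2_int[OF fm am(2) ai(2)])
  have idm: "(\<lambda>x. an n x - a x) \<in> borel_measurable M" for n using am by measurable
  have id2: "integrable M (\<lambda>x. (an n x - a x)\<^sup>2)" for n
  proof (rule Bochner_Integration.integrable_bound[where M=M and f="\<lambda>x. 2 * (an n x)\<^sup>2 + 2 * (a x)\<^sup>2"])
    show "integrable M (\<lambda>x. 2 * (an n x)\<^sup>2 + 2 * (a x)\<^sup>2)" using ai by auto
    show "(\<lambda>x. (an n x - a x)\<^sup>2) \<in> borel_measurable M" using am by measurable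
    show "AE x in M. norm ((an n x - a x)\<^sup>2) \<le> norm (2 * (an n x)\<^sup>2 + 2 * (a x)\<^sup>2)"
    proof (rule AE_I2)
      fix x
      have "(an n x - a x)\<^sup>2 \<le> 2 * (an n x)\<^sup>2 + 2 * (a x)\<^sup>2"
      proof -
        have h: "0 \<le> (an n x + a x)\<^sup>2" by simp
        have "(an n x - a x)\<^sup>2 = (an n x)\<^sup>2 + (a x)\<^sup>2 - 2 * an n x * a x" by (simp add: power2_eq_square algebra_simps)
        moreover have "(an n x + a x)\<^sup>2 = (an n x)\<^sup>2 + (a x)\<^sup>2 + 2 * an n x * a x" by (simp add: power2_eq_square algebra_simps)
        ultimately show ?thesis using h by linarith
      qed
      thus "norm ((an n x - a x)\<^sup>2) \<le> norm (2 * (an n x)\<^sup>2 + 2 * (a x)\<^sup>2)" by simp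
    qed
  qed
  have igd: "integrable M (\<lambda>x. g x * (an n x - a x))" for n
    by (rule bmult_int[OF _ gm gb]) (use ian ia in auto)
  have ig1: "integrable M (\<lambda>x. g x * an n x)" for n by (rule bmult_int[OF ian gm gb])
  have ig2: "integrable M (\<lambda>x. g x * a x)" by (rule bmult_int[OF ia gm gb])
  have B0: "B \<ge> 0 \<or> space M = {}" using gb by (metis abs_ge_zero equals0I order_trans)
  have bnd: "norm (integral\<^sup>L M (\<lambda>x. g x * an n x) - integral\<^sup>L M (\<lambda>x. g x * a x))
        \<le> \<bar>B\<bar> * sqrt (\<mu> * integral\<^sup>L M (\<lambda>x. (an n x - a x)\<^sup>2))" for n
  proof -
    have "integral\<^sup>L M (\<lambda>x. g x * an n x) - integral\<^sup>L M (\<lambda>x. g x * a x)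
          = integral\<^sup>L M (\<lambda>x. g x * (an n x - a x))"
      using ig1 ig2 by (simp add: right_diff_distrib)
    hence "norm (integral\<^sup>L M (\<lambda>x. g x * an n x) - integral\<^sup>L M (\<lambda>x. g x * a x))
         = \<bar>integral\<^sup>L M (\<lambda>x. g x * (an n x - a x))\<bar>" by simp
    also have "\<dots> \<le> integral\<^sup>L M (\<lambda>x. \<bar>B\<bar> * \<bar>an n x - a x\<bar>)"
    proof (rule abs_bound_int)
      show "integrable M (\<lambda>x. g x * (an n x - a x))" by (rule igd)
      show "integrable M (\<lambda>x. \<bar>B\<bar> * \<bar>an n x - a x\<bar>)" using ian ia by auto
      show "\<bar>g x * (an n x - a x)\<bar> \<le> \<bar>B\<bar> * \<bar>an n x - a x\<bar>" if "x \<in> space M" for x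
      proof -
        have "\<bar>g x\<bar> \<le> \<bar>B\<bar>" using gb[OF that] by linarith
        thus ?thesis by (simp add: abs_mult mult_right_mono)
      qed
    qed
    also have "\<dots> = \<bar>B\<bar> * integral\<^sup>L M (\<lambda>x. \<bar>an n x - a x\<bar>)" by simp
    also have "integral\<^sup>L M (\<lambda>x. \<bar>an n x - a x\<bar>) \<le> sqrt (\<mu> * integral\<^sup>L M (\<lambda>x. (an n x - a x)\<^sup>2))"
    proof -
      have "(integral\<^sup>L M (\<lambda>x. \<bar>an n x - a x\<bar>))\<^sup>2 \<le> \<mu> * integral\<^sup>L M (\<lambda>x. (an n x - a x)\<^sup>2)"
        unfolding \<mu>_def by (rule CS_int[OF fm idm id2])
      thus ?thesis by (metis abs_ge_zero integral_nonneg_AE AE_I2 real_le_rsqrt)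
    qed
    hence "\<bar>B\<bar> * integral\<^sup>L M (\<lambda>x. \<bar>an n x - a x\<bar>) \<le> \<bar>B\<bar> * sqrt (\<mu> * integral\<^sup>L M (\<lambda>x. (an n x - a x)\<^sup>2))"
      by (intro mult_left_mono) auto
    finally show ?thesis .
  qed
  have "(\<lambda>n. \<bar>B\<bar> * sqrt (\<mu> * integral\<^sup>L M (\<lambda>x. (an n x - a x)\<^sup>2))) \<longlonglongrightarrow> \<bar>B\<bar> * sqrt (\<mu> * 0)"
    by (intro tendsto_intros lim)
  hence "(\<lambda>n. \<bar>B\<bar> * sqrt (\<mu> * integral\<^sup>L M (\<lambda>x. (an n x - a x)\<^sup>2))) \<longlonglongrightarrow> 0" by simp
  hence "(\<lambda>n. integral\<^sup>L M (\<lambda>x. g x * an n x) - integral\<^sup>L M (\<lambda>x. g x * a x)) \<longlonglongrightarrow> 0"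
    by (rule Lim_null_comparison[rotated]) (use bnd in auto)
  thus ?thesis by (simp add: LIM_zero_iff)
qed
lemma zero_inK: "inK \<Omega> (\<lambda>x. 0) (\<lambda>x. 0)"
  unfolding inK_def H10_def H1_def L2_def test_fun_def
  by (auto intro!: exI[of _ "\<lambda>n x. 0"] simp: frechet_derivative_const cgrad_def)

lemma test_L2:
  assumes Om: "open \<Omega>" "bounded \<Omega>" and ts: "test_fun \<Omega> s"
  shows "s \<in> borel_measurable (lebesgue_on \<Omega>)" "integrable (lebesgue_on \<Omega>) (\<lambda>x. (s x)\<^sup>2)"
    and "(\<lambda>x. cgrad s x $ 1) \<in> borel_measurable (lebesgue_on \<Omega>)"
    "integrable (lebesgue_on \<Omega>) (\<lambda>x. (cgrad s x $ 1)\<^sup>2)"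
proof -
  note tf = test_facts[OF ts]
  have OL: "\<Omega> \<in> sets lebesgue" using Om(1) by (rule open_lebesgue)
  have Olm: "\<Omega> \<in> lmeasurable" using Om(2) OL by (rule bounded_set_imp_lmeasurable)
  have c1: "continuous_on \<Omega> s" "continuous_on \<Omega> (\<lambda>x. cgrad s x $ 1)"
    using tf(2,3) continuous_on_subset by blast+
  show "s \<in> borel_measurable (lebesgue_on \<Omega>)" "(\<lambda>x. cgrad s x $ 1) \<in> borel_measurable (lebesgue_on \<Omega>)"
    using c1 OL by (auto intro: continuous_imp_measurable_on_sets_lebesgue)
  obtain Ms where Ms: "\<And>x. \<bar>s x\<bar> \<le> Ms" using cont_compact_bound[OF tf(2) tf(4) tf(6)] by blast
  obtain Mp where Mp: "\<And>x. \<bar>cgrad s x $ 1\<bar> \<le> Mp" using cont_compact_bound[OF tf(3) tf(4) tf(7)] by blast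
  show "integrable (lebesgue_on \<Omega>) (\<lambda>x. (s x)\<^sup>2)"
  proof (rule bdd_int[OF Olm, of _ "Ms\<^sup>2"])
    show "continuous_on \<Omega> (\<lambda>x. (s x)\<^sup>2)" using c1 by (intro continuous_intros)
    show "\<bar>(s x)\<^sup>2\<bar> \<le> Ms\<^sup>2" for x using power_mono[OF Ms[of x] abs_ge_zero, of 2] by simp
  qed
  show "integrable (lebesgue_on \<Omega>) (\<lambda>x. (cgrad s x $ 1)\<^sup>2)"
  proof (rule bdd_int[OF Olm, of _ "Mp\<^sup>2"])
    show "continuous_on \<Omega> (\<lambda>x. (cgrad s x $ 1)\<^sup>2)" using c1(2) by (rule continuous_on_power)
    show "\<bar>(cgrad s x $ 1)\<^sup>2\<bar> \<le> Mp\<^sup>2" for x using power_mono[OF Mp[of x] abs_ge_zero, of 2] by simp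
  qed
qed

lemma H10_ident:
  fixes w Dw :: "pt \<Rightarrow> real"
  assumes Om: "open \<Omega>" "bounded \<Omega>" and H: "H10 \<Omega> q Dq"
    and cw: "continuous_on \<Omega> w" and cDw: "continuous_on \<Omega> Dw"
    and dw: "\<And>x. x \<in> \<Omega> \<Longrightarrow> ((\<lambda>t. w (x + t *\<^sub>R e1)) has_real_derivative Dw x) (at 0)"
    and bw: "\<And>x. x \<in> \<Omega> \<Longrightarrow> \<bar>w x\<bar> \<le> B" and bDw: "\<And>x. x \<in> \<Omega> \<Longrightarrow> \<bar>Dw x\<bar> \<le> B"
  shows "integral\<^sup>L (lebesgue_on \<Omega>) (\<lambda>x. w x * Dq x $ 1) =
         - integral\<^sup>L (lebesgue_on \<Omega>) (\<lambda>x. Dw x * q x)"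
proof -
  obtain s where s: "\<And>n. test_fun \<Omega> (s n)"
    "(\<lambda>n. integral\<^sup>L (lebesgue_on \<Omega>) (\<lambda>x. (s n x - q x)\<^sup>2)) \<longlonglongrightarrow> 0"
    "\<And>i. (\<lambda>n. integral\<^sup>L (lebesgue_on \<Omega>) (\<lambda>x. (cgrad (s n) x $ i - Dq x $ i)\<^sup>2)) \<longlonglongrightarrow> 0"
    using H unfolding H10_def by blast
  have L: "L2 \<Omega> q" "L2 \<Omega> (\<lambda>x. Dq x $ 1)" using H unfolding H10_def H1_def by auto
  have OL: "\<Omega> \<in> sets lebesgue" using Om(1) by (rule open_lebesgue)
  have Olm: "\<Omega> \<in> lmeasurable" using Om(2) OL by (rule bounded_set_imp_lmeasurable)
  have fm: "finite_measure (lebesgue_on \<Omega>)" using Olm by (rule finite_measure_lebesgue_on)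
  have sp: "space (lebesgue_on \<Omega>) = \<Omega>" by simp
  have wm: "w \<in> borel_measurable (lebesgue_on \<Omega>)" "Dw \<in> borel_measurable (lebesgue_on \<Omega>)"
    using cw cDw OL by (auto intro: continuous_imp_measurable_on_sets_lebesgue)
  note tl = test_L2[OF Om s(1)]
  have lim1: "(\<lambda>n. integral\<^sup>L (lebesgue_on \<Omega>) (\<lambda>x. w x * cgrad (s n) x $ 1))
      \<longlonglongrightarrow> integral\<^sup>L (lebesgue_on \<Omega>) (\<lambda>x. w x * Dq x $ 1)"
    by (rule lim_int[OF fm wm(1), of B]) (use bw L tl s(3) in \<open>auto simp: L2_def\<close>)
  have lim2: "(\<lambda>n. integral\<^sup>L (lebesgue_on \<Omega>) (\<lambda>x. Dw x * s n x))
      \<longlonglongrightarrow> integral\<^sup>L (lebesgue_on \<Omega>) (\<lambda>x. Dw x * q x)"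
    by (rule lim_int[OF fm wm(2), of B]) (use bDw L tl s(2) in \<open>auto simp: L2_def\<close>)
  have eq: "integral\<^sup>L (lebesgue_on \<Omega>) (\<lambda>x. w x * cgrad (s n) x $ 1) =
      - integral\<^sup>L (lebesgue_on \<Omega>) (\<lambda>x. Dw x * s n x)" for n
    by (rule ibp[OF Om s(1) cw cDw dw bw bDw])
  have "(\<lambda>n. integral\<^sup>L (lebesgue_on \<Omega>) (\<lambda>x. w x * cgrad (s n) x $ 1))
      \<longlonglongrightarrow> - integral\<^sup>L (lebesgue_on \<Omega>) (\<lambda>x. Dw x * q x)"
    unfolding eq by (intro tendsto_minus lim2)
  thus ?thesis using lim1 LIMSEQ_unique by blast
qed
theorem lemma3p1:
  fixes \<Omega> :: "pt set" and h0 :: "pt \<Rightarrow> real" and F :: real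
  assumes "open \<Omega>" and "bounded \<Omega>" and "regular_boundary \<Omega>" and "0 \<in> \<Omega>"
    and "C1_closure \<Omega> h0" and "\<forall>x\<in>closure \<Omega>. h0 x \<ge> 0" and "h0 0 = 0"
    and "F > 0"
  shows "(\<exists>c1>0. \<forall>\<beta>>0. \<forall>\<gamma>\<ge>0. \<forall>q Dq. solves_VI \<Omega> h0 \<beta> \<gamma> q Dq \<longrightarrow>
            Gfun \<Omega> F q \<le> c1 / \<beta>^3 - F)
       \<and> (\<forall>\<beta>>0. \<forall>\<gamma>. \<gamma> \<ge> (SUP x\<in>\<Omega>. - pderiv 1 h0 x) \<longrightarrow> (\<forall>q Dq. solves_VI \<Omega> h0 \<beta> \<gamma> q Dq \<longrightarrow>
            Gfun \<Omega> F q = - F))"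
proof -
  note Om = assms(1,2)
  define M where "M = lebesgue_on \<Omega>"
  have OL: "\<Omega> \<in> sets lebesgue" using Om(1) by (rule open_lebesgue)
  have Olm: "\<Omega> \<in> lmeasurable" using Om(2) OL by (rule bounded_set_imp_lmeasurable)
  have fm: "finite_measure M" unfolding M_def using Olm by (rule finite_measure_lebesgue_on)
  have sp: "space M = \<Omega>" unfolding M_def by simp
  define \<mu> where "\<mu> = measure M (space M)"
  have \<mu>0: "\<mu> \<ge> 0" unfolding \<mu>_def by simp
  obtain D where ch: "continuous_on (closure \<Omega>) h0" and cD: "continuous_on (closure \<Omega>) D"
    and dh: "\<And>x. x \<in> \<Omega> \<Longrightarrow> (h0 has_derivative (\<lambda>v. D x \<bullet> v)) (at x)"
    using assms(5) unfolding C1_closure_def by blast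
  have cc: "compact (closure \<Omega>)" using Om(2) by (simp add: compact_closure)
  obtain H where H: "\<And>x. x \<in> closure \<Omega> \<Longrightarrow> norm (h0 x) \<le> H" "H > 0"
    using compact_continuous_image[OF ch cc] compact_imp_bounded bounded_pos by (metis imageI)
  obtain HD where HD: "\<And>x. x \<in> closure \<Omega> \<Longrightarrow> norm (D x) \<le> HD" "HD > 0"
    using compact_continuous_image[OF cD cc] compact_imp_bounded bounded_pos by (metis imageI)
  obtain R where R: "\<And>x. x \<in> \<Omega> \<Longrightarrow> norm x \<le> R" "R > 0"
    using Om(2) bounded_pos by metis
  have clO: "\<And>x. x \<in> \<Omega> \<Longrightarrow> x \<in> closure \<Omega>" using closure_subset by blast
  have h0b: "\<And>x. x \<in> \<Omega> \<Longrightarrow> 0 \<le> h0 x \<and> h0 x \<le> H" using H(1) assms(6) clO by fastforce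
  have Db: "\<bar>D x $ 1\<bar> \<le> HD" if "x \<in> \<Omega>" for x
  proof -
    have "norm (D x $ 1) \<le> norm (D x)" by (rule Finite_Cartesian_Product.norm_nth_le)
    moreover have "norm (D x) \<le> HD" using HD(1) clO[OF that] by blast
    ultimately show ?thesis by simp
  qed
  have x1b: "\<bar>x $ 1\<bar> \<le> R" if "x \<in> \<Omega>" for x :: pt
  proof -
    have "norm (x $ 1) \<le> norm x" by (rule Finite_Cartesian_Product.norm_nth_le)
    moreover have "norm x \<le> R" using R(1) that by blast
    ultimately show ?thesis by simp
  qed
  have chO: "continuous_on \<Omega> h0" by (rule continuous_on_subset[OF ch closure_subset])
  have cDO0: "continuous_on \<Omega> D" by (rule continuous_on_subset[OF cD closure_subset])
  have cDO: "continuous_on \<Omega> (\<lambda>x. D x $ 1)" using cDO0 by (intro continuous_intros)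
  have hm: "h0 \<in> borel_measurable M" "(\<lambda>x. D x $ 1) \<in> borel_measurable M"
    unfolding M_def using chO cDO OL by (auto intro: continuous_imp_measurable_on_sets_lebesgue)
  have x1m: "(\<lambda>x. x $ 1) \<in> borel_measurable M"
    unfolding M_def using OL
    by (intro continuous_imp_measurable_on_sets_lebesgue) (auto intro: continuous_intros)
  have pd: "pderiv 1 h0 x = D x $ 1" if "x \<in> \<Omega>" for x
  proof -
    have "frechet_derivative h0 (at x) = (\<lambda>v. D x \<bullet> v)"
      by (rule frechet_derivative_at[OF dh[OF that], symmetric])
    thus ?thesis unfolding pderiv_def by (simp add: inner_axis)
  qed
  have main: "\<beta>^3 * integral\<^sup>L M (\<lambda>x. (Dq x $ 1)\<^sup>2) + \<gamma> * integral\<^sup>L M q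
               \<le> integral\<^sup>L M (\<lambda>x. h0 x * Dq x $ 1)
     \<and> integral\<^sup>L M (\<lambda>x. h0 x * Dq x $ 1) \<le> H * integral\<^sup>L M (\<lambda>x. \<bar>Dq x $ 1\<bar>)
     \<and> integral\<^sup>L M (\<lambda>x. h0 x * Dq x $ 1) = - integral\<^sup>L M (\<lambda>x. D x $ 1 * q x)
     \<and> (integral\<^sup>L M (\<lambda>x. \<bar>Dq x $ 1\<bar>))\<^sup>2 \<le> \<mu> * integral\<^sup>L M (\<lambda>x. (Dq x $ 1)\<^sup>2)
     \<and> 0 \<le> integral\<^sup>L M (\<lambda>x. (Dq x $ 1)\<^sup>2)
     \<and> 0 \<le> integral\<^sup>L M q
     \<and> integral\<^sup>L M q \<le> R * integral\<^sup>L M (\<lambda>x. \<bar>Dq x $ 1\<bar>)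
     \<and> (AE x in M. q x \<ge> 0)
     \<and> integrable M q \<and> integrable M (\<lambda>x. D x $ 1 * q x)"
    if b: "\<beta> > 0" and sol: "solves_VI \<Omega> h0 \<beta> \<gamma> q Dq" for \<beta> \<gamma> q Dq
  proof -
    have K: "inK \<Omega> q Dq" using sol unfolding solves_VI_def by blast
    have H10: "H10 \<Omega> q Dq" and AEq: "AE x in M. q x \<ge> 0" using K unfolding inK_def M_def by auto
    have L: "L2 \<Omega> q" "L2 \<Omega> (\<lambda>x. Dq x $ 1)" "L2 \<Omega> (\<lambda>x. Dq x $ 2)"
      using H10 unfolding H10_def H1_def by auto
    have qm: "q \<in> borel_measurable M" "integrable M (\<lambda>x. (q x)\<^sup>2)" using L(1) unfolding L2_def M_def by auto
    have f1m: "(\<lambda>x. Dq x $ 1) \<in> borel_measurable M" "integrable M (\<lambda>x. (Dq x $ 1)\<^sup>2)"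
      using L(2) unfolding L2_def M_def by auto
    have f2m: "(\<lambda>x. Dq x $ 2) \<in> borel_measurable M" "integrable M (\<lambda>x. (Dq x $ 2)\<^sup>2)"
      using L(3) unfolding L2_def M_def by auto
    have qi: "integrable M q" by (rule L2_int[OF fm qm])
    have f1i: "integrable M (\<lambda>x. Dq x $ 1)" by (rule L2_int[OF fm f1m])
    have f1a: "integrable M (\<lambda>x. \<bar>Dq x $ 1\<bar>)" using f1i by simp
    have vi: "(\<integral>x. (h0 x + \<beta>)^3 * (Dq x \<bullet> ((\<lambda>x. 0) x - Dq x)) \<partial>lebesgue_on \<Omega>)
        \<ge> (\<integral>x. h0 x * ((\<lambda>x. 0::pt) x $ 1 - Dq x $ 1) \<partial>lebesgue_on \<Omega>)
           - \<gamma> * (\<integral>x. (\<lambda>x. 0) x - q x \<partial>lebesgue_on \<Omega>)"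
      using sol zero_inK[of \<Omega>] unfolding solves_VI_def by blast
    define E where "E = integral\<^sup>L M (\<lambda>x. (h0 x + \<beta>)^3 * ((Dq x $ 1)\<^sup>2 + (Dq x $ 2)\<^sup>2))"
    have e1: "(\<lambda>x. (h0 x + \<beta>)^3 * (Dq x \<bullet> ((\<lambda>x. 0) x - Dq x))) =
              (\<lambda>x. - ((h0 x + \<beta>)^3 * ((Dq x $ 1)\<^sup>2 + (Dq x $ 2)\<^sup>2)))"
      by (simp add: inner_vec_def sum_2 power2_eq_square algebra_simps)
    have e2: "(\<lambda>x. h0 x * ((\<lambda>x. 0::pt) x $ 1 - Dq x $ 1)) = (\<lambda>x. - (h0 x * Dq x $ 1))" by simp
    have e3: "(\<lambda>x. (\<lambda>x. 0) x - q x) = (\<lambda>x. - q x)" by simp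
    have vi2: "E + \<gamma> * integral\<^sup>L M q \<le> integral\<^sup>L M (\<lambda>x. h0 x * Dq x $ 1)"
      using vi unfolding e1 e2 e3 E_def M_def by simp
    have hbm: "(\<lambda>x. (h0 x + \<beta>)^3) \<in> borel_measurable M" using hm(1) by measurable
    have hbb: "\<bar>(h0 x + \<beta>)^3\<bar> \<le> (H + \<beta>)^3" if "x \<in> space M" for x
    proof -
      have "0 \<le> h0 x + \<beta>" "h0 x + \<beta> \<le> H + \<beta>" using h0b[of x] that b sp by auto
      thus ?thesis using power_mono[of "h0 x + \<beta>" "H + \<beta>" 3] by simp
    qed
    have Ei: "integrable M (\<lambda>x. (h0 x + \<beta>)^3 * ((Dq x $ 1)\<^sup>2 + (Dq x $ 2)\<^sup>2))"
      by (rule bmult_int[OF _ hbm hbb]) (use f1m f2m in auto)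
    have bE: "\<beta>^3 * integral\<^sup>L M (\<lambda>x. (Dq x $ 1)\<^sup>2) \<le> E"
    proof -
      have "\<beta>^3 * integral\<^sup>L M (\<lambda>x. (Dq x $ 1)\<^sup>2) = integral\<^sup>L M (\<lambda>x. \<beta>^3 * (Dq x $ 1)\<^sup>2)" by simp
      also have "\<dots> \<le> E" unfolding E_def
      proof (rule integral_mono)
        show "integrable M (\<lambda>x. \<beta> ^ 3 * (Dq x $ 1)\<^sup>2)" using f1m by simp
        show "integrable M (\<lambda>x. (h0 x + \<beta>)^3 * ((Dq x $ 1)\<^sup>2 + (Dq x $ 2)\<^sup>2))" by (rule Ei)
        show "\<beta> ^ 3 * (Dq x $ 1)\<^sup>2 \<le> (h0 x + \<beta>)^3 * ((Dq x $ 1)\<^sup>2 + (Dq x $ 2)\<^sup>2)"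
          if "x \<in> space M" for x
        proof (rule mult_mono)
          show "\<beta> ^ 3 \<le> (h0 x + \<beta>)^3" using h0b[of x] that sp b by (intro power_mono) auto
        qed (use b h0b[of x] that sp in auto)
      qed
      finally show ?thesis .
    qed
    have Pi: "integrable M (\<lambda>x. h0 x * Dq x $ 1)"
      by (rule bmult_int[OF f1i hm(1), of H]) (use h0b sp in auto)
    have PH: "integral\<^sup>L M (\<lambda>x. h0 x * Dq x $ 1) \<le> H * integral\<^sup>L M (\<lambda>x. \<bar>Dq x $ 1\<bar>)"
    proof -
      have "integral\<^sup>L M (\<lambda>x. h0 x * Dq x $ 1) \<le> integral\<^sup>L M (\<lambda>x. H * \<bar>Dq x $ 1\<bar>)"
      proof (rule integral_mono[OF Pi])
        show "integrable M (\<lambda>x. H * \<bar>Dq x $ 1\<bar>)" using f1a by simp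
        show "h0 x * Dq x $ 1 \<le> H * \<bar>Dq x $ 1\<bar>" if "x \<in> space M" for x
        proof -
          have "h0 x * Dq x $ 1 \<le> \<bar>h0 x\<bar> * \<bar>Dq x $ 1\<bar>" by (metis abs_ge_self abs_mult)
          also have "\<dots> \<le> H * \<bar>Dq x $ 1\<bar>" using h0b[of x] that sp by (intro mult_right_mono) auto
          finally show ?thesis .
        qed
      qed
      thus ?thesis by simp
    qed
    have idh: "integral\<^sup>L M (\<lambda>x. h0 x * Dq x $ 1) = - integral\<^sup>L M (\<lambda>x. D x $ 1 * q x)"
      unfolding M_def
    proof (rule H10_ident[OF Om H10 chO cDO, of "max H HD"])
      show "((\<lambda>t. h0 (x + t *\<^sub>R e1)) has_real_derivative D x $ 1) (at 0)" if "x \<in> \<Omega>" for x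
        using line_deriv[OF dh[OF that], of e1] by (simp add: inner_axis)
      show "\<bar>h0 x\<bar> \<le> max H HD" if "x \<in> \<Omega>" for x using h0b[OF that] by auto
      show "\<bar>D x $ 1\<bar> \<le> max H HD" if "x \<in> \<Omega>" for x using Db[OF that] by auto
    qed
    have idx: "integral\<^sup>L M (\<lambda>x. x $ 1 * Dq x $ 1) = - integral\<^sup>L M (\<lambda>x. 1 * q x)"
      unfolding M_def
    proof (rule H10_ident[OF Om H10, of _ _ "max R 1"])
      show "continuous_on \<Omega> (\<lambda>x::pt. x $ 1)" by (intro continuous_intros)
      show "continuous_on \<Omega> (\<lambda>x::pt. 1::real)" by (intro continuous_intros)
      show "((\<lambda>t. (x + t *\<^sub>R e1) $ 1) has_real_derivative 1) (at 0)" for x :: pt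
        by (auto intro!: derivative_eq_intros)
      show "\<bar>x $ 1\<bar> \<le> max R 1" if "x \<in> \<Omega>" for x :: pt using x1b[OF that] by auto
      show "\<bar>1::real\<bar> \<le> max R 1" by simp
    qed
    have CS: "(integral\<^sup>L M (\<lambda>x. \<bar>Dq x $ 1\<bar>))\<^sup>2 \<le> \<mu> * integral\<^sup>L M (\<lambda>x. (Dq x $ 1)\<^sup>2)"
      unfolding \<mu>_def by (rule CS_int[OF fm f1m])
    have Q0: "0 \<le> integral\<^sup>L M (\<lambda>x. (Dq x $ 1)\<^sup>2)" by simp
    have I0: "0 \<le> integral\<^sup>L M q" using AEq by (rule integral_nonneg_AE)
    have IR: "integral\<^sup>L M q \<le> R * integral\<^sup>L M (\<lambda>x. \<bar>Dq x $ 1\<bar>)"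
    proof -
      have "integral\<^sup>L M q = - integral\<^sup>L M (\<lambda>x. x $ 1 * Dq x $ 1)" using idx by simp
      also have "\<dots> \<le> \<bar>integral\<^sup>L M (\<lambda>x. x $ 1 * Dq x $ 1)\<bar>" by simp
      also have "\<dots> \<le> integral\<^sup>L M (\<lambda>x. R * \<bar>Dq x $ 1\<bar>)"
      proof (rule abs_bound_int)
        show "integrable M (\<lambda>x. x $ 1 * Dq x $ 1)"
          by (rule bmult_int[OF f1i x1m, of R]) (use x1b sp in auto)
        show "integrable M (\<lambda>x. R * \<bar>Dq x $ 1\<bar>)" using f1a by simp
        show "\<bar>x $ 1 * Dq x $ 1\<bar> \<le> R * \<bar>Dq x $ 1\<bar>" if "x \<in> space M" for x
          unfolding abs_mult using x1b[of x] that sp by (intro mult_right_mono) auto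
      qed
      also have "\<dots> = R * integral\<^sup>L M (\<lambda>x. \<bar>Dq x $ 1\<bar>)" by simp
      finally show ?thesis .
    qed
    have Dqi: "integrable M (\<lambda>x. D x $ 1 * q x)"
      by (rule bmult_int[OF qi hm(2), of HD]) (use Db sp in auto)
    show ?thesis using vi2 bE PH idh CS Q0 I0 IR AEq qi Dqi by linarith
  qed
  have Gq: "Gfun \<Omega> F q = integral\<^sup>L M q - F" for q unfolding Gfun_def M_def by simp
  show ?thesis
  proof
    define c1 where "c1 = R * \<mu> * H + 1"
    have c1p: "c1 > 0" unfolding c1_def using R(2) H(2) \<mu>0 by (simp add: add_nonneg_pos)
    show "\<exists>c1>0. \<forall>\<beta>>0. \<forall>\<gamma>\<ge>0. \<forall>q Dq. solves_VI \<Omega> h0 \<beta> \<gamma> q Dq \<longrightarrow>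
            Gfun \<Omega> F q \<le> c1 / \<beta>^3 - F"
    proof (intro exI[of _ c1] conjI allI impI c1p)
      fix \<beta> \<gamma> :: real and q Dq
      assume b: "\<beta> > 0" and g: "\<gamma> \<ge> 0" and sol: "solves_VI \<Omega> h0 \<beta> \<gamma> q Dq"
      define A where "A = integral\<^sup>L M (\<lambda>x. \<bar>Dq x $ 1\<bar>)"
      define Q where "Q = integral\<^sup>L M (\<lambda>x. (Dq x $ 1)\<^sup>2)"
      define I where "I = integral\<^sup>L M q"
      define P where "P = integral\<^sup>L M (\<lambda>x. h0 x * Dq x $ 1)"
      have m: "\<beta>^3 * Q + \<gamma> * I \<le> P" "P \<le> H * A" "A\<^sup>2 \<le> \<mu> * Q" "0 \<le> Q" "0 \<le> I" "I \<le> R * A"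
        using main[OF b sol] unfolding A_def Q_def I_def P_def by auto
      have A0: "A \<ge> 0" unfolding A_def by simp
      have b3: "\<beta>^3 > 0" using b by simp
      have "\<gamma> * I \<ge> 0" using g m(5) by simp
      hence bQ: "\<beta>^3 * Q \<le> H * A" using m(1,2) by (simp add: power2_eq_square)
      have AB: "\<beta>^3 * A \<le> \<mu> * H"
      proof (cases "A > 0")
        case True
        have "\<beta>^3 * A\<^sup>2 \<le> \<beta>^3 * (\<mu> * Q)" using m(3) b3 by (intro mult_left_mono) auto
        also have "\<dots> = \<mu> * (\<beta>^3 * Q)" by simp
        also have "\<dots> \<le> \<mu> * (H * A)" using bQ \<mu>0 by (intro mult_left_mono) auto
        finally have "(\<beta>^3 * A) * A \<le> (\<mu> * H) * A" by (simp add: power2_eq_square algebra_simps)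
        thus ?thesis using True by simp
      next
        case False
        hence "A = 0" using A0 by simp
        thus ?thesis using \<mu>0 H(2) by simp
      qed
      have "I \<le> R * A" by (rule m(6))
      also have "R * A \<le> R * (\<mu> * H / \<beta>^3)"
        using AB b3 R(2) by (intro mult_left_mono) (auto simp: field_simps)
      also have "\<dots> \<le> c1 / \<beta>^3" unfolding c1_def using b3 by (simp add: field_simps)
      finally have "I \<le> c1 / \<beta>^3" .
      thus "Gfun \<Omega> F q \<le> c1 / \<beta>^3 - F" unfolding Gq I_def by simp
    qed
  next
    show "\<forall>\<beta>>0. \<forall>\<gamma>. \<gamma> \<ge> (SUP x\<in>\<Omega>. - pderiv 1 h0 x) \<longrightarrow> (\<forall>q Dq. solves_VI \<Omega> h0 \<beta> \<gamma> q Dq \<longrightarrow>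
            Gfun \<Omega> F q = - F)"
    proof (intro allI impI)
      fix \<beta> \<gamma> :: real and q Dq
      assume b: "\<beta> > 0" and g: "\<gamma> \<ge> (SUP x\<in>\<Omega>. - pderiv 1 h0 x)" and sol: "solves_VI \<Omega> h0 \<beta> \<gamma> q Dq"
      have bdd: "bdd_above ((\<lambda>x. - pderiv 1 h0 x) ` \<Omega>)"
      proof (rule bdd_aboveI2)
        show "- pderiv 1 h0 x \<le> HD" if "x \<in> \<Omega>" for x using pd[OF that] Db[OF that] by auto
      qed
      have gD: "\<gamma> + D x $ 1 \<ge> 0" if "x \<in> \<Omega>" for x
      proof -
        have "- pderiv 1 h0 x \<le> (SUP x\<in>\<Omega>. - pderiv 1 h0 x)" using that bdd by (rule cSUP_upper)
        thus ?thesis using g pd[OF that] by simp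
      qed
      define A where "A = integral\<^sup>L M (\<lambda>x. \<bar>Dq x $ 1\<bar>)"
      define Q where "Q = integral\<^sup>L M (\<lambda>x. (Dq x $ 1)\<^sup>2)"
      define I where "I = integral\<^sup>L M q"
      define P where "P = integral\<^sup>L M (\<lambda>x. h0 x * Dq x $ 1)"
      define J where "J = integral\<^sup>L M (\<lambda>x. D x $ 1 * q x)"
      have m: "\<beta>^3 * Q + \<gamma> * I \<le> P" "P = - J" "A\<^sup>2 \<le> \<mu> * Q" "0 \<le> Q" "0 \<le> I" "I \<le> R * A"
        and AEq: "AE x in M. q x \<ge> 0" and qi: "integrable M q" and Dqi: "integrable M (\<lambda>x. D x $ 1 * q x)"
        using main[OF b sol] unfolding A_def Q_def I_def P_def J_def by auto
      have "0 \<le> integral\<^sup>L M (\<lambda>x. (\<gamma> + D x $ 1) * q x)"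
      proof (rule integral_nonneg_AE)
        show "AE x in M. 0 \<le> (\<gamma> + D x $ 1) * q x"
          using AEq by (rule AE_mp) (intro AE_I2, use gD sp in auto)
      qed
      also have "integral\<^sup>L M (\<lambda>x. (\<gamma> + D x $ 1) * q x) = \<gamma> * I + J"
      proof -
        have "(\<lambda>x. (\<gamma> + D x $ 1) * q x) = (\<lambda>x. \<gamma> * q x + D x $ 1 * q x)" by (simp add: algebra_simps)
        thus ?thesis unfolding I_def J_def using qi Dqi by (simp add: Bochner_Integration.integral_add)
      qed
      finally have "0 \<le> \<gamma> * I + J" .
      hence "\<beta>^3 * Q \<le> 0" using m(1,2) by linarith
      hence "Q \<le> 0" using b by (simp add: mult_le_0_iff)
      hence "Q = 0" using m(4) by simp
      hence "A\<^sup>2 \<le> 0" using m(3) by simp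
      hence "A = 0" by simp
      hence "I = 0" using m(5,6) by simp
      thus "Gfun \<Omega> F q = - F" unfolding Gq I_def by simp
    qed
  qed
qed
end
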